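(* Let $G$ be a directed graph with vertex set $V=\{1,\dots,n\}$, let $\Delta<n$ be a positive integer and let $i\ge 1$ be an integer. Let $V'=\{x':x\in V\}$ and $V''=\{x'':x\in V\}$ be two disjoint copies of $V$, and let $G_i$ be the graph with vertex set $V\cup V'\cup V''$ and edge set consisting of: $xy$ and $x'y''$ for every $xy\in E(G)$, and $xx'$ for every $x\in V$ with $x\in[(i-1)\Delta+1,\,i\Delta]$. Then for any $u,v\in V$ with $u\neq v$, a $u\to v''$ path exists in $G_i$ if and only if there exists a $u\to v$ path $P$ in $G$ whose last edge $yv$ satisfies $y\in[(i-1)\Delta+1,\,i\Delta]$. *)

theory Defs
  imports Main
begin

text \<open>Vertices of the auxiliary graph G_i: V, V' and V'' as three tagged copies of nat.\<close>
datatype vtx = Orig nat | Prime nat | DPrime nat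

definition is_path :: "('a \<times> 'a) set \<Rightarrow> 'a list \<Rightarrow> 'a \<Rightarrow> 'a \<Rightarrow> bool" where
  "is_path E ps u v \<longleftrightarrow> ps \<noteq> [] \<and> hd ps = u \<and> last ps = v \<and>
     (\<forall>k. Suc k < length ps \<longrightarrow> (ps ! k, ps ! Suc k) \<in> E)"

definition Gi_edges :: "nat \<Rightarrow> (nat \<times> nat) set \<Rightarrow> nat \<Rightarrow> nat \<Rightarrow> (vtx \<times> vtx) set" where
  "Gi_edges n E \<Delta> i =
     {(Orig x, Orig y) | x y. (x, y) \<in> E} \<union>
     {(Prime x, DPrime y) | x y. (x, y) \<in> E} \<union>
     {(Orig x, Prime x) | x. x \<in> {1..n} \<and> x \<in> {(i - 1) * \<Delta> + 1 .. i * \<Delta>}}"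

end

theory Submission
  imports Defs
begin

lemma is_path_single: "is_path E [x] u v \<longleftrightarrow> u = x \<and> v = x"
  by (auto simp: is_path_def)

lemma is_path_snoc:
  assumes "ps \<noteq> []"
  shows "is_path E (ps @ [y]) u v \<longleftrightarrow> is_path E ps u (last ps) \<and> (last ps, y) \<in> E \<and> v = y"
proof
  assume h: "is_path E (ps @ [y]) u v"
  have st: "\<forall>k. Suc k < length (ps @ [y]) \<longrightarrow> ((ps @ [y]) ! k, (ps @ [y]) ! Suc k) \<in> E"
    using h unfolding is_path_def by blast
  have "((ps @ [y]) ! (length ps - 1), (ps @ [y]) ! Suc (length ps - 1)) \<in> E"
  proof -
    have "Suc (length ps - 1) < length (ps @ [y])" using assms by simp
    then show ?thesis using st by blast
  qed
  moreover have "Suc (length ps - 1) = length ps" using assms by simp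
  ultimately have "(last ps, y) \<in> E" using assms by (simp add: last_conv_nth nth_append)
  moreover have "\<forall>k. Suc k < length ps \<longrightarrow> (ps ! k, ps ! Suc k) \<in> E"
  proof (intro allI impI)
    fix k assume k: "Suc k < length ps"
    then have "((ps @ [y]) ! k, (ps @ [y]) ! Suc k) \<in> E" using st by simp
    then show "(ps ! k, ps ! Suc k) \<in> E" using k by (simp add: nth_append)
  qed
  moreover have "hd ps = u" using h assms unfolding is_path_def by simp
  ultimately show "is_path E ps u (last ps) \<and> (last ps, y) \<in> E \<and> v = y"
    using h assms unfolding is_path_def by simp
next
  assume h: "is_path E ps u (last ps) \<and> (last ps, y) \<in> E \<and> v = y"
  show "is_path E (ps @ [y]) u v" unfolding is_path_def
  proof (intro conjI allI impI)
    fix k assume k: "Suc k < length (ps @ [y])"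
    show "((ps @ [y]) ! k, (ps @ [y]) ! Suc k) \<in> E"
    proof (cases "Suc k < length ps")
      case True then show ?thesis using h by (simp add: nth_append is_path_def)
    next
      case False
      then have "Suc k = length ps" using k by simp
      then have "k = length ps - 1" by simp
      then show ?thesis using h assms \<open>Suc k = length ps\<close> by (simp add: nth_append last_conv_nth)
    qed
  qed (use h assms in \<open>auto simp: is_path_def\<close>)
qed

lemma forward:
  assumes "is_path (Gi_edges n E \<Delta> i) qs (Orig a) t"
  shows "(\<forall>b. t = Orig b \<longrightarrow> (\<exists>ps. is_path E ps a b)) \<and>
         (\<forall>b. t = Prime b \<longrightarrow> (\<exists>ps. is_path E ps a b \<and> b \<in> {(i - 1) * \<Delta> + 1 .. i * \<Delta>})) \<and>
         (\<forall>b. t = DPrime b \<longrightarrow> (\<exists>ps. is_path E ps a b \<and> 2 \<le> length ps \<and>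
               ps ! (length ps - 2) \<in> {(i - 1) * \<Delta> + 1 .. i * \<Delta>}))"
  using assms
proof (induction qs arbitrary: t rule: rev_induct)
  case Nil then show ?case by (simp add: is_path_def)
next
  case (snoc y qs)
  show ?case
  proof (cases "qs = []")
    case True
    then show ?thesis using snoc.prems by (auto simp: is_path_single intro: exI[of _ "[a]"])
  next
    case False
    from snoc.prems False have p: "is_path (Gi_edges n E \<Delta> i) qs (Orig a) (last qs)"
      and e: "(last qs, y) \<in> Gi_edges n E \<Delta> i" and ty: "t = y"
      by (simp_all add: is_path_snoc)
    note IH = snoc.IH[OF p]
    from e consider (oo) x b where "last qs = Orig x" "y = Orig b" "(x, b) \<in> E"
      | (op) x where "last qs = Orig x" "y = Prime x" "x \<in> {(i - 1) * \<Delta> + 1 .. i * \<Delta>}"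
      | (pd) x b where "last qs = Prime x" "y = DPrime b" "(x, b) \<in> E"
      unfolding Gi_edges_def by blast
    then show ?thesis
    proof cases
      case oo
      then obtain ps where ps: "is_path E ps a x" using IH by auto
      then have "ps \<noteq> []" "last ps = x" by (auto simp: is_path_def)
      then have "is_path E (ps @ [b]) a b" using ps oo by (simp add: is_path_snoc)
      then show ?thesis using oo ty by auto
    next
      case op
      then show ?thesis using IH ty by auto
    next
      case pd
      then obtain ps where ps: "is_path E ps a x" and r: "x \<in> {(i - 1) * \<Delta> + 1 .. i * \<Delta>}"
        using IH by auto
      then have ne: "ps \<noteq> []" and l: "last ps = x" by (auto simp: is_path_def)
      then have "is_path E (ps @ [b]) a b" using ps pd by (simp add: is_path_snoc)
      moreover have "(ps @ [b]) ! (length (ps @ [b]) - 2) = x"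
        using ne l by (simp add: nth_append last_conv_nth)
      moreover have "2 \<le> length (ps @ [b])" using ne by (cases ps) auto
      ultimately have "\<exists>ps. is_path E ps a b \<and> 2 \<le> length ps \<and>
               ps ! (length ps - 2) \<in> {(i - 1) * \<Delta> + 1 .. i * \<Delta>}" using r by metis
      then show ?thesis using pd ty by simp
    qed
  qed
qed

lemma orig_path:
  assumes "is_path E ps u v"
  shows "is_path (Gi_edges n E \<Delta> i) (map Orig ps) (Orig u) (Orig v)"
  using assms unfolding is_path_def Gi_edges_def
  by (auto simp: hd_map last_map)

theorem lemma6:
  fixes n \<Delta> i :: nat and E :: "(nat \<times> nat) set" and u v :: nat
  assumes "E \<subseteq> {1..n} \<times> {1..n}"
    and "0 < \<Delta>" and "\<Delta> < n" and "1 \<le> i"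
    and "u \<in> {1..n}" and "v \<in> {1..n}" and "u \<noteq> v"
  shows "(\<exists>ps. is_path (Gi_edges n E \<Delta> i) ps (Orig u) (DPrime v)) \<longleftrightarrow>
         (\<exists>ps. is_path E ps u v \<and> 2 \<le> length ps \<and>
               ps ! (length ps - 2) \<in> {(i - 1) * \<Delta> + 1 .. i * \<Delta>})"
proof
  assume "\<exists>ps. is_path (Gi_edges n E \<Delta> i) ps (Orig u) (DPrime v)"
  then show "\<exists>ps. is_path E ps u v \<and> 2 \<le> length ps \<and>
               ps ! (length ps - 2) \<in> {(i - 1) * \<Delta> + 1 .. i * \<Delta>}"
    using forward by blast
next
  assume "\<exists>ps. is_path E ps u v \<and> 2 \<le> length ps \<and>
               ps ! (length ps - 2) \<in> {(i - 1) * \<Delta> + 1 .. i * \<Delta>}"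
  then obtain ps where ps: "is_path E ps u v" and len: "2 \<le> length ps"
    and r: "ps ! (length ps - 2) \<in> {(i - 1) * \<Delta> + 1 .. i * \<Delta>}" by blast
  define qs where "qs = butlast ps"
  have ne: "qs \<noteq> []" using len by (cases ps rule: rev_cases) (auto simp: qs_def)
  have psq: "ps = qs @ [v]" using ps unfolding qs_def is_path_def by (metis append_butlast_last_id)
  have lq: "last qs = ps ! (length ps - 2)"
    using ne psq by (simp add: nth_append last_conv_nth)
  have pq: "is_path E qs u (last qs)" and e: "(last qs, v) \<in> E"
    using ps ne psq is_path_snoc by metis+
  define y where "y = last qs"
  have yn: "y \<in> {1..n}" using e assms(1) y_def by auto
  have yr: "y \<in> {(i - 1) * \<Delta> + 1 .. i * \<Delta>}" using r lq y_def by simp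
  have p1: "is_path (Gi_edges n E \<Delta> i) (map Orig qs) (Orig u) (Orig y)"
    using orig_path[OF pq] y_def by simp
  have ne2: "map Orig qs \<noteq> []" using ne by simp
  have "is_path (Gi_edges n E \<Delta> i) (map Orig qs @ [Prime y]) (Orig u) (Prime y)"
    using p1 ne2 yn yr by (subst is_path_snoc) (auto simp: last_map ne y_def Gi_edges_def)
  then have "is_path (Gi_edges n E \<Delta> i) ((map Orig qs @ [Prime y]) @ [DPrime v]) (Orig u) (DPrime v)"
    using e y_def by (subst is_path_snoc) (auto simp: Gi_edges_def)
  then show "\<exists>ps. is_path (Gi_edges n E \<Delta> i) ps (Orig u) (DPrime v)" by blast
qed

end
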